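(* Let $G$, $\sigma$, $X$ (strict wonderful of rank $r$ with canonical real structure $\mu$), $T$, $Z$ be as in the context. Let $x$ be a real point ($\mu(x)=x$) in $X^\circ_G\cap Z$, let $H$ be its stabilizer in $G$, let $A=T/(T\cap H)$ and let ${}_2A\subset A$ be the subgroup of elements of order at most $2$. Then the $T^\sigma_0$-orbits in $\mathbb RZ\cap X^\circ_G$ are in one-to-one correspondence with the elements of ${}_2A$. In particular, the number of such orbits does not exceed $2^r$.
   Context: $G$ is a connected reductive complex algebraic group; $\sigma=\tau\circ\theta$ with $\theta$ a Weyl involution (algebraic involution with $\theta(t)=t^{-1}$ on a maximal torus) and $\tau$ the Cartan involution of a $\theta$-stable maximal compact subgroup. A wonderful $G$-variety of rank $r$ is a complete smooth $G$-variety with an open $G$-orbit $X^\circ_G$ whose complement is a union of $r$ smooth prime divisors with normal crossings, the $G$-orbit closures being their partial intersections; strict means all stabilizers are self-normalizing. The canonical real structure is the unique algebraic anti-holomorphic involution $\mu$ with $\mu(gx)=\sigma(g)\mu(x)$; $\mathbb RX$ is its fixed set and $\mathbb RZ=Z\cap\mathbb RX$. $T$ is a maximal torus with $\sigma(T)=T$, acting as $z\mapsto\bar z$ in coordinates; $T^\sigma_0$ is the identity component of its $\sigma$-fixed group. $Z$ is the $\mu$-stable slice of the Local Structure Theorem: with $B\supset T$ a $\sigma$-stable Borel, $B^-$ its opposite, $y$ the $B^-$-fixed point of the closed orbit, $P$ the parabolic opposite to $G_y$ containing $T$, $L=P\cap G_y$, $P^u$ the unipotent radical, $Z$ is an $L$-stable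 affine subvariety through $y$ with $P^u\times Z\cong X\setminus\bigcup D$ (union of $B$-stable non-$G$-stable prime divisors), constructed in a $\sigma$-compatible simple projective embedding so that $\mu(Z)=Z$. $Z$ is an affine space of dimension $r$ on which $T$ acts linearly with linearly independent characters $\gamma_1,\dots,\gamma_r$ (the spherical roots), meeting each $G$-orbit in one $T$-orbit, and $T\cap H=\bigcap_i\ker\gamma_i$. *)

theory Defs
  imports Complex_Main
begin

text \<open>The maximal torus T of dimension n is (C^*)^n; an element is a function
  nat => complex, nonzero on indices < n and equal to 1 elsewhere.\<close>

definition torus :: "nat \<Rightarrow> (nat \<Rightarrow> complex) set" where
  "torus n = {t. (\<forall>j<n. t j \<noteq> 0) \<and> (\<forall>j\<ge>n. t j = 1)}"

definition tmult :: "(nat \<Rightarrow> complex) \<Rightarrow> (nat \<Rightarrow> complex) \<Rightarrow> nat \<Rightarrow> complex" where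
  "tmult s t = (\<lambda>j. s j * t j)"

definition chi :: "nat \<Rightarrow> (nat \<Rightarrow> int) \<Rightarrow> (nat \<Rightarrow> complex) \<Rightarrow> complex" where
  "chi n g t = (\<Prod>j<n. t j powi g j)"

text \<open>Characters gamma_1..gamma_r (rows g i, i < r) linearly independent
  (over Q, equivalently over R) in the character lattice.\<close>
definition lin_indep_chars :: "nat \<Rightarrow> nat \<Rightarrow> (nat \<Rightarrow> nat \<Rightarrow> int) \<Rightarrow> bool" where
  "lin_indep_chars n r g \<longleftrightarrow>
     (\<forall>c :: nat \<Rightarrow> real. (\<forall>j<n. (\<Sum>i<r. c i * of_int (g i j)) = 0) \<longrightarrow> (\<forall>i<r. c i = 0))"

text \<open>The slice Z as the affine space C^r (coordinates >= r are 0).\<close>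
definition affsp :: "nat \<Rightarrow> (nat \<Rightarrow> complex) set" where
  "affsp r = {z. \<forall>i\<ge>r. z i = 0}"

definition act :: "nat \<Rightarrow> nat \<Rightarrow> (nat \<Rightarrow> nat \<Rightarrow> int) \<Rightarrow> (nat \<Rightarrow> complex) \<Rightarrow> (nat \<Rightarrow> complex) \<Rightarrow> nat \<Rightarrow> complex" where
  "act n r g t z = (\<lambda>i. if i < r then chi n (g i) t * z i else 0)"

definition sigmaT :: "(nat \<Rightarrow> complex) \<Rightarrow> nat \<Rightarrow> complex" where
  "sigmaT t = (\<lambda>j. cnj (t j))"

text \<open>T^sigma = (R^*)^n; its identity component T^sigma_0 = (R_{>0})^n.\<close>
definition torus_sigma :: "nat \<Rightarrow> (nat \<Rightarrow> complex) set" where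
  "torus_sigma n = {t \<in> torus n. sigmaT t = t}"

definition torus_sigma0 :: "nat \<Rightarrow> (nat \<Rightarrow> complex) set" where
  "torus_sigma0 n = {t \<in> torus_sigma n. \<forall>j<n. Re (t j) > 0}"

text \<open>X_G^o \<inter> Z: the T-orbit of x (the open G-orbit meets Z in one T-orbit).\<close>
definition open_part :: "nat \<Rightarrow> nat \<Rightarrow> (nat \<Rightarrow> nat \<Rightarrow> int) \<Rightarrow> (nat \<Rightarrow> complex) \<Rightarrow> (nat \<Rightarrow> complex) set" where
  "open_part n r g x = {act n r g t x | t. t \<in> torus n}"

definition real_open_part where
  "real_open_part n r g mu x = {z \<in> open_part n r g x. mu z = z}"

definition sigma0_orbits where
  "sigma0_orbits n r g mu x =
     {{act n r g t z | t. t \<in> torus_sigma0 n} | z. z \<in> real_open_part n r g mu x}"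

definition stabT where
  "stabT n r g x = {t \<in> torus n. act n r g t x = x}"

definition cosetT where
  "cosetT n K t = {tmult t h | h. h \<in> K}"

definition quotA where
  "quotA n r g x = {cosetT n (stabT n r g x) t | t. t \<in> torus n}"

definition twoA where
  "twoA n r g x = {cosetT n (stabT n r g x) t | t. t \<in> torus n \<and> tmult t t \<in> stabT n r g x}"

end

theory Submission imports Defs "HOL-Library.FuncSet" begin

lemma chi_mult: "chi n g (tmult s t) = chi n g s * chi n g t"
  by (simp add: chi_def tmult_def power_int_mult_distrib prod.distrib)

lemma chi_cnj: "chi n g (sigmaT t) = cnj (chi n g t)"
  by (simp add: chi_def sigmaT_def cnj_prod complex_cnj_power_int)

lemma chi_norm: "norm (chi n g t) = (\<Prod>j<n. norm (t j) powi g j)"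
  by (simp add: chi_def prod_norm[symmetric] norm_power_int)

lemma chi_real: "chi n g (\<lambda>j. complex_of_real (f j)) = of_real (\<Prod>j<n. f j powi g j)"
  by (simp add: chi_def of_real_power_int)

lemma chi_nz: "t \<in> torus n \<Longrightarrow> chi n g t \<noteq> 0"
  by (auto simp: chi_def torus_def power_int_eq_0_iff)

lemma torus_nz: "t \<in> torus n \<Longrightarrow> t j \<noteq> 0"
  unfolding torus_def by (cases "j < n") auto

lemma chi_pos: assumes "t \<in> torus_sigma0 n" shows "\<exists>\<rho>>0. chi n g t = complex_of_real \<rho>"
proof -
  have re: "\<And>j. j < n \<Longrightarrow> t j = complex_of_real (Re (t j)) \<and> Re (t j) > 0"
  proof -
    fix j assume j: "j < n"
    have "cnj (t j) = t j" using assms unfolding torus_sigma0_def torus_sigma_def sigmaT_def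
      by (metis (mono_tags, lifting) mem_Collect_eq)
    hence "Im (t j) = 0" by (metis cnj.sel(2) complex_cnj_cancel_iff equal_neg_zero)
    thus "t j = complex_of_real (Re (t j)) \<and> Re (t j) > 0" using assms j
      unfolding torus_sigma0_def by (auto simp: complex_eq_iff)
  qed
  have "chi n g t = chi n g (\<lambda>j. complex_of_real (Re (t j)))"
    unfolding chi_def by (intro prod.cong refl) (metis lessThan_iff re)
  also have "\<dots> = of_real (\<Prod>j<n. Re (t j) powi g j)" by (rule chi_real)
  finally show ?thesis using re
    by (intro exI[of _ "\<Prod>j<n. Re (t j) powi g j"]) (auto intro!: prod_pos)
qed

lemma T0_iff: "t \<in> torus_sigma0 n \<longleftrightarrow> (\<forall>j. (j < n \<longrightarrow> Im (t j) = 0 \<and> Re (t j) > 0) \<and> (j \<ge> n \<longrightarrow> t j = 1))"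
proof
  assume a: "t \<in> torus_sigma0 n"
  hence c: "\<And>j. cnj (t j) = t j" unfolding torus_sigma0_def torus_sigma_def sigmaT_def
    by (metis (mono_tags, lifting) mem_Collect_eq)
  have "\<And>j. Im (t j) = 0" using c by (metis cnj.sel(2) complex_cnj_cancel_iff equal_neg_zero)
  thus "(\<forall>j. (j < n \<longrightarrow> Im (t j) = 0 \<and> Re (t j) > 0) \<and> (j \<ge> n \<longrightarrow> t j = 1))"
    using a unfolding torus_sigma0_def torus_sigma_def torus_def by auto
next
  assume a: "(\<forall>j. (j < n \<longrightarrow> Im (t j) = 0 \<and> Re (t j) > 0) \<and> (j \<ge> n \<longrightarrow> t j = 1))"
  have "sigmaT t = t"
    unfolding sigmaT_def
  proof
    fix j show "cnj (t j) = t j" using a by (cases "j < n") (auto simp: complex_eq_iff)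
  qed
  moreover have "t \<in> torus n" unfolding torus_def using a by (auto simp: complex_eq_iff)
  ultimately show "t \<in> torus_sigma0 n" using a unfolding torus_sigma0_def torus_sigma_def by auto
qed

lemma T0_mult: "s \<in> torus_sigma0 n \<Longrightarrow> t \<in> torus_sigma0 n \<Longrightarrow> tmult s t \<in> torus_sigma0 n"
  unfolding T0_iff tmult_def by auto

lemma T0_div: "s \<in> torus_sigma0 n \<Longrightarrow> t \<in> torus_sigma0 n \<Longrightarrow> (\<lambda>j. s j / t j) \<in> torus_sigma0 n"
  unfolding T0_iff by (auto simp: Im_divide Re_divide intro!: divide_pos_pos)

lemma T0_one: "(\<lambda>j. 1) \<in> torus_sigma0 n"
  unfolding T0_iff by auto


lemma act_act: "act n r g s (act n r g t z) = act n r g (tmult s t) z"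
  by (auto simp: act_def chi_mult fun_eq_iff)

lemma sq1: "(a::complex) * a = 1 \<longleftrightarrow> a = 1 \<or> a = -1"
  by algebra

lemma norm1_real: assumes "norm (a::complex) = 1" "Im a = 0" shows "a = 1 \<or> a = -1"
proof -
  have e: "a = complex_of_real (Re a)" using assms(2) by (simp add: complex_eq_iff)
  hence "\<bar>Re a\<bar> = 1" using assms(1) by (metis norm_of_real)
  hence "Re a = 1 \<or> Re a = -1" by auto
  thus ?thesis using e by auto
qed

lemma card_signs: "finite {s :: nat \<Rightarrow> complex. (\<forall>i<r. s i = 1 \<or> s i = -1) \<and> (\<forall>i\<ge>r. s i = 0)}
   \<and> card {s :: nat \<Rightarrow> complex. (\<forall>i<r. s i = 1 \<or> s i = -1) \<and> (\<forall>i\<ge>r. s i = 0)} \<le> 2 ^ r"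
proof -
  let ?h = "\<lambda>f i. if i < r then f i else (0::complex)"
  let ?P = "PiE {..<r} (\<lambda>_. {1, -1::complex})"
  have sub: "{s :: nat \<Rightarrow> complex. (\<forall>i<r. s i = 1 \<or> s i = -1) \<and> (\<forall>i\<ge>r. s i = 0)} \<subseteq> ?h ` ?P"
  proof
    fix s assume s: "s \<in> {s :: nat \<Rightarrow> complex. (\<forall>i<r. s i = 1 \<or> s i = -1) \<and> (\<forall>i\<ge>r. s i = 0)}"
    have "restrict s {..<r} \<in> ?P" using s by auto
    moreover have "s = ?h (restrict s {..<r})" using s by (auto simp: fun_eq_iff)
    ultimately show "s \<in> ?h ` ?P" by blast
  qed
  have fP: "finite ?P" by (auto intro!: finite_PiE)
  have "card ?P = 2 ^ r" by (simp add: card_PiE numeral_2_eq_2)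
  hence "card (?h ` ?P) \<le> 2 ^ r" using card_image_le[OF fP, of ?h] by simp
  thus ?thesis using sub fP by (meson card_mono finite_imageI finite_subset order_trans)
qed


theorem proposition5p3:
  fixes n r :: nat
    and g :: "nat \<Rightarrow> nat \<Rightarrow> int"
    and mu :: "(nat \<Rightarrow> complex) \<Rightarrow> (nat \<Rightarrow> complex)"
    and x :: "nat \<Rightarrow> complex"
  assumes indep: "lin_indep_chars n r g"
    and mu_Z: "\<And>z. z \<in> affsp r \<Longrightarrow> mu z \<in> affsp r"
    and mu_inv: "\<And>z. z \<in> affsp r \<Longrightarrow> mu (mu z) = z"
    and mu_equiv: "\<And>t z. t \<in> torus n \<Longrightarrow> z \<in> affsp r \<Longrightarrow>
                     mu (act n r g t z) = act n r g (sigmaT t) (mu z)"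
    and x_Z: "x \<in> affsp r"
    and x_open: "\<And>i. i < r \<Longrightarrow> x i \<noteq> 0"
    and x_real: "mu x = x"
  shows "(\<exists>f. bij_betw f (sigma0_orbits n r g mu x) (twoA n r g x))
         \<and> finite (sigma0_orbits n r g mu x)
         \<and> card (sigma0_orbits n r g mu x) \<le> 2 ^ r"
proof -
  define gv where "gv t = (\<lambda>i. if i < r then chi n (g i) t else 0)" for t
  define S where "S = {gv t | t. t \<in> torus n \<and> (\<forall>i<r. chi n (g i) t = 1 \<or> chi n (g i) t = -1)}"
  define Orb where "Orb s = {act n r g t' (\<lambda>i. s i * x i) | t'. t' \<in> torus_sigma0 n}" for s
  define Cos where "Cos s = {t \<in> torus n. gv t = s}" for s
  have x0: "\<And>i. i \<ge> r \<Longrightarrow> x i = 0" using x_Z unfolding affsp_def by auto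
  have act_gv: "act n r g t x = (\<lambda>i. gv t i * x i)" for t
    by (auto simp: act_def gv_def fun_eq_iff x0)
  have act_aff: "act n r g t z \<in> affsp r" for t z by (auto simp: act_def affsp_def)
  have gv_eq: "gv t = gv t' \<longleftrightarrow> (\<forall>i<r. chi n (g i) t = chi n (g i) t')" for t t'
    by (auto simp: gv_def fun_eq_iff)
  have stab: "h \<in> stabT n r g x \<longleftrightarrow> h \<in> torus n \<and> (\<forall>i<r. chi n (g i) h = 1)" for h
  proof -
    have "act n r g h x = x \<longleftrightarrow> (\<forall>i<r. chi n (g i) h = 1)"
    proof
      assume a: "act n r g h x = x"
      show "\<forall>i<r. chi n (g i) h = 1"
      proof (intro allI impI)
        fix i assume i: "i < r"
        have "chi n (g i) h * x i = x i" using fun_cong[OF a, of i] i by (simp add: act_def)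
        thus "chi n (g i) h = 1" using x_open[OF i] by simp
      qed
    next
      assume "\<forall>i<r. chi n (g i) h = 1"
      thus "act n r g h x = x" by (auto simp: act_def fun_eq_iff x0)
    qed
    thus ?thesis unfolding stabT_def by auto
  qed
  have coset: "cosetT n (stabT n r g x) t = Cos (gv t)" if t: "t \<in> torus n" for t
  proof
    show "cosetT n (stabT n r g x) t \<subseteq> Cos (gv t)"
    proof
      fix y assume "y \<in> cosetT n (stabT n r g x) t"
      then obtain h where h: "h \<in> stabT n r g x" "y = tmult t h" unfolding cosetT_def by auto
      have "y \<in> torus n" using h t stab[of h] unfolding torus_def tmult_def by auto
      moreover have "gv y = gv t" using h stab[of h] by (auto simp: gv_eq chi_mult)
      ultimately show "y \<in> Cos (gv t)" unfolding Cos_def by auto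
    qed
  next
    show "Cos (gv t) \<subseteq> cosetT n (stabT n r g x) t"
    proof
      fix y assume y: "y \<in> Cos (gv t)"
      define h where "h = (\<lambda>j. y j / t j)"
      have yT: "y \<in> torus n" and gy: "gv y = gv t" using y unfolding Cos_def by auto
      have th: "tmult t h = y" using torus_nz[OF t] unfolding h_def tmult_def by auto
      have hT: "h \<in> torus n" using yT t unfolding h_def torus_def by auto
      have "\<forall>i<r. chi n (g i) h = 1"
      proof (intro allI impI)
        fix i assume i: "i < r"
        have "chi n (g i) y = chi n (g i) t" using gy i gv_eq by blast
        hence "chi n (g i) t * chi n (g i) h = chi n (g i) t" using th chi_mult by metis
        thus "chi n (g i) h = 1" using chi_nz[OF t] by simp
      qed
      hence "h \<in> stabT n r g x" using stab hT by blast
      thus "y \<in> cosetT n (stabT n r g x) t" using th unfolding cosetT_def by auto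
    qed
  qed
  have twoA_eq: "twoA n r g x = Cos ` S"
  proof
    show "twoA n r g x \<subseteq> Cos ` S"
    proof
      fix c assume "c \<in> twoA n r g x"
      then obtain t where t: "t \<in> torus n" "tmult t t \<in> stabT n r g x" "c = cosetT n (stabT n r g x) t"
        unfolding twoA_def by auto
      have "\<forall>i<r. chi n (g i) t = 1 \<or> chi n (g i) t = -1"
        using t(2) stab by (auto simp: chi_mult sq1)
      hence "gv t \<in> S" using t(1) unfolding S_def by auto
      thus "c \<in> Cos ` S" using t coset by auto
    qed
  next
    show "Cos ` S \<subseteq> twoA n r g x"
    proof
      fix c assume "c \<in> Cos ` S"
      then obtain t where t: "t \<in> torus n" "\<forall>i<r. chi n (g i) t = 1 \<or> chi n (g i) t = -1" "c = Cos (gv t)"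
        unfolding S_def by auto
      have "tmult t t \<in> torus n" using t(1) unfolding torus_def tmult_def by auto
      hence "tmult t t \<in> stabT n r g x" using t(2) stab by (auto simp: chi_mult)
      thus "c \<in> twoA n r g x" using t coset unfolding twoA_def by auto
    qed
  qed
  have inj_Cos: "inj_on Cos S"
  proof
    fix s1 s2 assume s1: "s1 \<in> S" and s2: "s2 \<in> S" and e: "Cos s1 = Cos s2"
    obtain t where t: "t \<in> torus n" "s1 = gv t" using s1 unfolding S_def by auto
    have "t \<in> Cos s1" using t unfolding Cos_def by auto
    hence "t \<in> Cos s2" using e by simp
    thus "s1 = s2" using t unfolding Cos_def by auto
  qed
  have bijA: "bij_betw Cos S (twoA n r g x)" using inj_Cos twoA_eq by (simp add: bij_betw_def)
  have real_iff: "act n r g t x \<in> real_open_part n r g mu x \<longleftrightarrow> (\<forall>i<r. Im (chi n (g i) t) = 0)"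
    if t: "t \<in> torus n" for t
  proof -
    have "mu (act n r g t x) = act n r g (sigmaT t) x" using mu_equiv[OF t x_Z] x_real by simp
    moreover have "act n r g (sigmaT t) x = act n r g t x \<longleftrightarrow> (\<forall>i<r. Im (chi n (g i) t) = 0)"
    proof
      assume a: "act n r g (sigmaT t) x = act n r g t x"
      show "\<forall>i<r. Im (chi n (g i) t) = 0"
      proof (intro allI impI)
        fix i assume i: "i < r"
        have "cnj (chi n (g i) t) * x i = chi n (g i) t * x i"
          using fun_cong[OF a, of i] i by (simp add: act_def chi_cnj)
        hence "cnj (chi n (g i) t) = chi n (g i) t" using x_open[OF i] by simp
        thus "Im (chi n (g i) t) = 0" by (metis Reals_cnj_iff complex_is_Real_iff)
      qed
    next
      assume a: "\<forall>i<r. Im (chi n (g i) t) = 0"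
      show "act n r g (sigmaT t) x = act n r g t x"
        using a by (auto simp: act_def chi_cnj fun_eq_iff complex_eq_iff)
    qed
    moreover have "act n r g t x \<in> open_part n r g x" using t unfolding open_part_def by auto
    ultimately show ?thesis unfolding real_open_part_def by auto
  qed
  have orb_gv: "Orb (gv t) = {act n r g t' (act n r g t x) | t'. t' \<in> torus_sigma0 n}" for t
    unfolding Orb_def act_gv by simp
  have orbits_eq: "sigma0_orbits n r g mu x = Orb ` S"
  proof
    show "sigma0_orbits n r g mu x \<subseteq> Orb ` S"
    proof
      fix Ob assume "Ob \<in> sigma0_orbits n r g mu x"
      then obtain z where z: "z \<in> real_open_part n r g mu x"
        "Ob = {act n r g t z | t. t \<in> torus_sigma0 n}" unfolding sigma0_orbits_def by auto
      then obtain t where t: "t \<in> torus n" "z = act n r g t x"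
        unfolding real_open_part_def open_part_def by auto
      have im: "\<forall>i<r. Im (chi n (g i) t) = 0" using real_iff[OF t(1)] z(1) t(2) by simp
      define t2 where "t2 = (\<lambda>j. complex_of_real (norm (t j)))"
      define t1 where "t1 = (\<lambda>j. t j / t2 j)"
      have nz: "\<And>j. t j \<noteq> 0" using torus_nz[OF t(1)] .
      have t2T0: "t2 \<in> torus_sigma0 n" unfolding T0_iff t2_def using nz t(1)
        unfolding torus_def by auto
      have t1T: "t1 \<in> torus n" using t(1) nz unfolding t1_def t2_def torus_def by auto
      have tt: "t = tmult t1 t2" using nz unfolding t1_def t2_def tmult_def by auto
      have sgn: "\<forall>i<r. chi n (g i) t1 = 1 \<or> chi n (g i) t1 = -1"
      proof (intro allI impI)
        fix i assume i: "i < r"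
        obtain \<rho> where \<rho>: "\<rho> > 0" "chi n (g i) t2 = complex_of_real \<rho>" using chi_pos[OF t2T0] by blast
        have n1: "norm (chi n (g i) t1) = 1" unfolding chi_norm t1_def t2_def
          using nz by (simp add: norm_divide)
        have "chi n (g i) t = chi n (g i) t1 * complex_of_real \<rho>" using tt chi_mult \<rho>(2) by metis
        hence "chi n (g i) t1 = chi n (g i) t / complex_of_real \<rho>" using \<rho>(1) by simp
        hence "Im (chi n (g i) t1) = 0" using im i by (simp add: Im_divide_of_real)
        thus "chi n (g i) t1 = 1 \<or> chi n (g i) t1 = -1" using norm1_real n1 by blast
      qed
      have S1: "gv t1 \<in> S" using t1T sgn unfolding S_def by auto
      have "Ob = Orb (gv t1)"
        unfolding z(2) orb_gv t(2)
      proof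
        show "{act n r g t' (act n r g t x) |t'. t' \<in> torus_sigma0 n}
            \<subseteq> {act n r g t' (act n r g t1 x) |t'. t' \<in> torus_sigma0 n}"
        proof
          fix y assume "y \<in> {act n r g t' (act n r g t x) |t'. t' \<in> torus_sigma0 n}"
          then obtain t' where t': "t' \<in> torus_sigma0 n" "y = act n r g t' (act n r g t x)" by auto
          have "y = act n r g (tmult t' t2) (act n r g t1 x)"
            using t'(2) tt by (simp add: act_act tmult_def ac_simps)
          thus "y \<in> {act n r g t' (act n r g t1 x) |t'. t' \<in> torus_sigma0 n}"
            using T0_mult[OF t'(1) t2T0] by blast
        qed
      next
        show "{act n r g t' (act n r g t1 x) |t'. t' \<in> torus_sigma0 n}
            \<subseteq> {act n r g t' (act n r g t x) |t'. t' \<in> torus_sigma0 n}"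
        proof
          fix y assume "y \<in> {act n r g t' (act n r g t1 x) |t'. t' \<in> torus_sigma0 n}"
          then obtain t' where t': "t' \<in> torus_sigma0 n" "y = act n r g t' (act n r g t1 x)" by auto
          define u where "u = (\<lambda>j. t' j / t2 j)"
          have t2nz: "\<And>j. t2 j \<noteq> 0" using nz unfolding t2_def by auto
          have "tmult u t = tmult t' t1" using tt t2nz unfolding u_def tmult_def by (auto simp: fun_eq_iff)
          hence "y = act n r g u (act n r g t x)" using t'(2) by (simp add: act_act)
          thus "y \<in> {act n r g t' (act n r g t x) |t'. t' \<in> torus_sigma0 n}"
            using T0_div[OF t'(1) t2T0] unfolding u_def by blast
        qed
      qed
      thus "Ob \<in> Orb ` S" using S1 by blast
    qed
  next
    show "Orb ` S \<subseteq> sigma0_orbits n r g mu x"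
    proof
      fix Ob assume "Ob \<in> Orb ` S"
      then obtain t where t: "t \<in> torus n" "\<forall>i<r. chi n (g i) t = 1 \<or> chi n (g i) t = -1" "Ob = Orb (gv t)"
        unfolding S_def by auto
      have "act n r g t x \<in> real_open_part n r g mu x" using real_iff[OF t(1)] t(2) by auto
      moreover have "Ob = {act n r g t' (act n r g t x) | t'. t' \<in> torus_sigma0 n}"
        using t(3) orb_gv by simp
      ultimately show "Ob \<in> sigma0_orbits n r g mu x" unfolding sigma0_orbits_def by blast
    qed
  qed
  have inj_Orb: "inj_on Orb S"
  proof
    fix s1 s2 assume s1: "s1 \<in> S" and s2: "s2 \<in> S" and e: "Orb s1 = Orb s2"
    obtain t1 where t1: "t1 \<in> torus n" "\<forall>i<r. chi n (g i) t1 = 1 \<or> chi n (g i) t1 = -1" "s1 = gv t1"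
      using s1 unfolding S_def by auto
    obtain t2 where t2: "t2 \<in> torus n" "\<forall>i<r. chi n (g i) t2 = 1 \<or> chi n (g i) t2 = -1" "s2 = gv t2"
      using s2 unfolding S_def by auto
    have "act n r g (\<lambda>j. 1) (act n r g t1 x) = act n r g t1 x"
      by (simp add: act_act tmult_def)
    hence "act n r g t1 x \<in> {act n r g t' (act n r g t1 x) | t'. t' \<in> torus_sigma0 n}"
      using T0_one by force
    hence "act n r g t1 x \<in> Orb s1" unfolding t1(3) orb_gv .
    hence "act n r g t1 x \<in> Orb s2" using e by simp
    hence "act n r g t1 x \<in> {act n r g t' (act n r g t2 x) | t'. t' \<in> torus_sigma0 n}"
      unfolding t2(3) orb_gv .
    then obtain t' where t': "t' \<in> torus_sigma0 n" "act n r g t1 x = act n r g t' (act n r g t2 x)"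
      by blast
    have "\<forall>i<r. chi n (g i) t1 = chi n (g i) t2"
    proof (intro allI impI)
      fix i assume i: "i < r"
      obtain \<rho> where \<rho>: "\<rho> > 0" "chi n (g i) t' = complex_of_real \<rho>" using chi_pos[OF t'(1)] by blast
      have "chi n (g i) t1 * x i = chi n (g i) t' * (chi n (g i) t2 * x i)"
        using fun_cong[OF t'(2), of i] i by (simp add: act_def)
      hence e2: "chi n (g i) t1 = complex_of_real \<rho> * chi n (g i) t2" using x_open[OF i] \<rho>(2) by simp
      have a1: "chi n (g i) t1 = 1 \<or> chi n (g i) t1 = -1" using t1(2) i by blast
      have a2: "chi n (g i) t2 = 1 \<or> chi n (g i) t2 = -1" using t2(2) i by blast
      show "chi n (g i) t1 = chi n (g i) t2"
      proof (rule ccontr)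
        assume ne: "chi n (g i) t1 \<noteq> chi n (g i) t2"
        have "Re (chi n (g i) t1) = \<rho> * Re (chi n (g i) t2)" using e2 by simp
        thus False using a1 a2 ne \<rho>(1) by auto
      qed
    qed
    thus "s1 = s2" using t1(3) t2(3) gv_eq by blast
  qed
  have bijO: "bij_betw Orb S (sigma0_orbits n r g mu x)" using inj_Orb orbits_eq by (simp add: bij_betw_def)
  have Ssub: "S \<subseteq> {s :: nat \<Rightarrow> complex. (\<forall>i<r. s i = 1 \<or> s i = -1) \<and> (\<forall>i\<ge>r. s i = 0)}"
    unfolding S_def gv_def by auto
  have fS: "finite S" and cS: "card S \<le> 2 ^ r"
    using card_signs[of r] Ssub by (auto intro: finite_subset card_mono order_trans)
  have "bij_betw (Cos \<circ> inv_into S Orb) (sigma0_orbits n r g mu x) (twoA n r g x)"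
    by (rule bij_betw_trans[OF bij_betw_inv_into[OF bijO] bijA])
  moreover have "finite (sigma0_orbits n r g mu x)" using orbits_eq fS by simp
  moreover have "card (sigma0_orbits n r g mu x) \<le> 2 ^ r"
    using bij_betw_same_card[OF bijO] cS by simp
  ultimately show ?thesis by blast
qed

end
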